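(* Let $G=(V,E)$ be a finite simple undirected graph, consider a run of \textsc{1-2-MinGreedy} on $G$ producing $M$, and let $M^*$ be a maximum matching such that each component of $(V,M\cup M^* )$ with an edge is an edge of $M\cap M^*$ or an $M$-$M^*$-path. Then (a) each endpoint of an $M$-$M^*$-path is the target of at most three transfers; and (b) an endpoint $w$ is the target of exactly three transfers if and only if there is a step in which the current degree of $w$ drops from $3$ to $1$ through the removal of two incident $F$-edges, and a later step in which the current degree of $w$ drops from $1$ to $0$ through the removal of its last incident $F$-edge.
   Context: \textsc{1-2-MinGreedy}: starting with $M=\emptyset$ and until no edges remain in the current graph, if every node has current degree at least $3$ select an arbitrary edge $\{u,v\}$, otherwise select an arbitrary node $u$ of minimum non-zero current degree and an arbitrary neighbor $v$; add $\{u,v\}$ to $M$ and remove all edges incident with $u$ or $v$. An $M$-$M^*$-path is a component of $(V,M\cup M^* )$ that is an alternating path starting and ending with an $M^*$-edge, with $m\geq1$ edges of $M$ and $m+1$ edges of $M^*$; its endpoints are its two $M$-uncovered end nodes. $F=E\setminus(M\cup M^* )$. For an endpoint $w$, an edge $\{v,w\}\in F$ is a transfer from $v$ to $w$ if, in the step of the algorithm in which $v$ is matched, the current degree of $w$ drops to at most $1$. *)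

theory Defs
  imports Main
begin

definition simple_graph :: "'a set \<Rightarrow> 'a set set \<Rightarrow> bool" where
  "simple_graph V E \<longleftrightarrow> finite V \<and>
     (\<forall>e\<in>E. \<exists>u v. e = {u, v} \<and> u \<noteq> v \<and> u \<in> V \<and> v \<in> V)"

definition matching :: "'a set set \<Rightarrow> 'a set set \<Rightarrow> bool" where
  "matching E M \<longleftrightarrow> M \<subseteq> E \<and> (\<forall>e\<in>M. \<forall>f\<in>M. e \<noteq> f \<longrightarrow> e \<inter> f = {})"

definition maximum_matching :: "'a set set \<Rightarrow> 'a set set \<Rightarrow> bool" where
  "maximum_matching E M \<longleftrightarrow> matching E M \<and> (\<forall>N. matching E N \<longrightarrow> card N \<le> card M)"

definition deg :: "'a set set \<Rightarrow> 'a \<Rightarrow> nat" where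
  "deg H x = card {e\<in>H. x \<in> e}"

definition remove_step :: "'a set set \<Rightarrow> 'a set \<Rightarrow> 'a set set" where
  "remove_step H e = {f\<in>H. f \<inter> e = {}}"

(* current edge set before step i (0-based) of the run es *)
definition cur :: "'a set set \<Rightarrow> 'a set list \<Rightarrow> nat \<Rightarrow> 'a set set" where
  "cur E es i = foldl remove_step E (take i es)"

(* es is the sequence of edges selected by a run of 1-2-MinGreedy on (V,E). *)
definition min_greedy_run :: "'a set \<Rightarrow> 'a set set \<Rightarrow> 'a set list \<Rightarrow> bool" where
  "min_greedy_run V E es \<longleftrightarrow>
     (\<forall>i<length es.
        es ! i \<in> cur E es i \<and>
        ((\<exists>x\<in>V. 0 < deg (cur E es i) x \<and> deg (cur E es i) x < 3) \<longrightarrow>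
          (\<exists>u\<in>es ! i. 0 < deg (cur E es i) u \<and>
              (\<forall>x\<in>V. 0 < deg (cur E es i) x \<longrightarrow> deg (cur E es i) u \<le> deg (cur E es i) x))))
     \<and> cur E es (length es) = {}"

definition comp_verts :: "'a set set \<Rightarrow> 'a \<Rightarrow> 'a set" where
  "comp_verts H x = {y. (x, y) \<in> {(a, b). {a, b} \<in> H}\<^sup>*}"

definition comp_edges :: "'a set set \<Rightarrow> 'a \<Rightarrow> 'a set set" where
  "comp_edges H x = {e\<in>H. e \<subseteq> comp_verts H x}"

definition path_edges :: "'a list \<Rightarrow> 'a set set" where
  "path_edges xs = {{xs ! i, xs ! Suc i} | i. Suc i < length xs}"

definition alt_path :: "'a set set \<Rightarrow> 'a set set \<Rightarrow> 'a list \<Rightarrow> bool" where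
  "alt_path M Ms xs \<longleftrightarrow> distinct xs \<and> (\<exists>m\<ge>1. length xs = 2 * m + 2) \<and>
     (\<forall>i. Suc i < length xs \<longrightarrow>
        (even i \<longrightarrow> {xs ! i, xs ! Suc i} \<in> Ms - M) \<and>
        (odd i \<longrightarrow> {xs ! i, xs ! Suc i} \<in> M - Ms))"

definition MMs_path :: "'a set set \<Rightarrow> 'a set set \<Rightarrow> 'a list \<Rightarrow> bool" where
  "MMs_path M Ms xs \<longleftrightarrow> alt_path M Ms xs \<and>
     comp_verts (M \<union> Ms) (hd xs) = set xs \<and> comp_edges (M \<union> Ms) (hd xs) = path_edges xs"

definition MMs_endpoint :: "'a set set \<Rightarrow> 'a set set \<Rightarrow> 'a \<Rightarrow> bool" where
  "MMs_endpoint M Ms w \<longleftrightarrow> (\<exists>xs. MMs_path M Ms xs \<and> (w = hd xs \<or> w = last xs))"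

definition good_components :: "'a set \<Rightarrow> 'a set set \<Rightarrow> 'a set set \<Rightarrow> bool" where
  "good_components V M Ms \<longleftrightarrow>
     (\<forall>x\<in>V. (\<exists>e\<in>M \<union> Ms. x \<in> e) \<longrightarrow>
        (\<exists>e\<in>M \<inter> Ms. comp_edges (M \<union> Ms) x = {e}) \<or>
        (\<exists>xs. MMs_path M Ms xs \<and> x \<in> set xs))"

(* {v,w} \<in> F is a transfer from v to w: in the step in which v is matched,
   the current degree of w drops to at most 1 *)
definition transfer :: "'a set set \<Rightarrow> 'a set list \<Rightarrow> 'a set set \<Rightarrow> 'a \<Rightarrow> 'a \<Rightarrow> bool" where
  "transfer E es Ms v w \<longleftrightarrow> {v, w} \<in> E - (set es \<union> Ms) \<and>
     (\<exists>i<length es. v \<in> es ! i \<and>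
        deg (cur E es (Suc i)) w < deg (cur E es i) w \<and> deg (cur E es (Suc i)) w \<le> 1)"

end

theory Submission
  imports Defs
begin

lemma cur_0: "cur E es 0 = E" by (simp add: cur_def)

lemma cur_Suc: "i < length es \<Longrightarrow> cur E es (Suc i) = remove_step (cur E es i) (es!i)"
  by (simp add: cur_def take_Suc_conv_app_nth)

lemma cur_Suc_sub: "cur E es (Suc i) \<subseteq> cur E es i"
proof (cases "i < length es")
  case True then show ?thesis by (simp add: cur_Suc remove_step_def)
next
  case False then show ?thesis by (simp add: cur_def)
qed

lemma cur_mono: "i \<le> j \<Longrightarrow> cur E es j \<subseteq> cur E es i"
  using lift_Suc_antimono_le[of "cur E es", OF cur_Suc_sub] by blast

lemma cur_E: "cur E es i \<subseteq> E"
  using cur_mono[of 0 i E es] by (simp add: cur_0)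

lemma es_in: "min_greedy_run V E es \<Longrightarrow> i < length es \<Longrightarrow> es!i \<in> cur E es i"
  by (simp add: min_greedy_run_def)

lemma es_disj:
  assumes "min_greedy_run V E es" "i < k" "k < length es"
  shows "es!i \<inter> es!k = {}"
proof -
  have "es!k \<in> cur E es (Suc i)" using es_in[OF assms(1) assms(3)] cur_mono[of "Suc i" k E es] assms by auto
  then show ?thesis using cur_Suc[of i es E] assms by (auto simp: remove_step_def)
qed

lemma cur_end: "min_greedy_run V E es \<Longrightarrow> length es \<le> n \<Longrightarrow> cur E es n = {}"
  using cur_mono[of "length es" n E es] by (auto simp: min_greedy_run_def)

lemma finE: "simple_graph V E \<Longrightarrow> finite E"
proof -
  assume sg: "simple_graph V E"
  then have "E \<subseteq> Pow V" by (auto simp: simple_graph_def)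
  moreover have "finite V" using sg by (simp add: simple_graph_def)
  then have "finite (Pow V)" by simp
  ultimately show ?thesis by (rule finite_subset)
qed

lemma edge2: "simple_graph V E \<Longrightarrow> e \<in> E \<Longrightarrow> \<exists>a b. e = {a,b} \<and> a \<noteq> b"
  unfolding simple_graph_def by blast

lemma removed_edges:
  assumes sg: "simple_graph V E" and run: "min_greedy_run V E es" and i: "i < length es"
    and w: "w \<notin> es!i"
  shows "{e \<in> cur E es i - cur E es (Suc i). w \<in> e} \<subseteq> (\<lambda>x. {w,x}) ` (es!i)"
proof
  fix e assume e: "e \<in> {e \<in> cur E es i - cur E es (Suc i). w \<in> e}"
  then have "e \<in> E" using cur_E by blast
  then obtain a b where ab: "e = {a,b}" using edge2[OF sg] by blast
  have "e \<inter> es!i \<noteq> {}" using e cur_Suc[OF i, of E] by (auto simp: remove_step_def)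
  then obtain x where x: "x \<in> e" "x \<in> es!i" by blast
  have "e = {w,x}" using x w ab e by auto
  then show "e \<in> (\<lambda>x. {w,x}) ` (es!i)" using x by blast
qed

lemma card_es: "simple_graph V E \<Longrightarrow> min_greedy_run V E es \<Longrightarrow> i < length es \<Longrightarrow> card (es!i) = 2"
proof -
  assume a: "simple_graph V E" "min_greedy_run V E es" "i < length es"
  then have "es!i \<in> E" using es_in[of V E es i] cur_E[of E es i] by blast
  then obtain a b where "es!i = {a,b}" "a \<noteq> b" using edge2[OF a(1)] by blast
  then show ?thesis by simp
qed

lemma card_removed:
  assumes sg: "simple_graph V E" and run: "min_greedy_run V E es" and i: "i < length es"
    and w: "w \<notin> es!i"
  shows "card {e \<in> cur E es i - cur E es (Suc i). w \<in> e} \<le> 2"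
proof -
  have f: "finite (es!i)" using card_es[OF sg run i] card.infinite by fastforce
  have "card {e \<in> cur E es i - cur E es (Suc i). w \<in> e} \<le> card ((\<lambda>x. {w,x}) ` (es!i))"
    by (rule card_mono[OF finite_imageI[OF f] removed_edges[OF assms]])
  also have "\<dots> \<le> 2" using card_image_le[OF f, of "\<lambda>x. {w,x}"] card_es[OF sg run i] by simp
  finally show ?thesis .
qed

lemma deg_split:
  assumes sg: "simple_graph V E"
  shows "deg (cur E es i) w = deg (cur E es (Suc i)) w + card {e \<in> cur E es i - cur E es (Suc i). w \<in> e}"
proof -
  let ?X = "{e\<in>cur E es i. w \<in> e}"
  let ?Y = "{e\<in>cur E es (Suc i). w \<in> e}"
  let ?Z = "{e \<in> cur E es i - cur E es (Suc i). w \<in> e}"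
  have fin: "finite ?X" by (rule finite_subset[OF _ finE[OF sg]]) (use cur_E[of E es i] in blast)
  have sub: "cur E es (Suc i) \<subseteq> cur E es i" by (rule cur_Suc_sub)
  have eq: "?X = ?Y \<union> ?Z" using sub by blast
  have f1: "finite ?Y" by (rule finite_subset[OF _ fin]) (use sub in blast)
  have f2: "finite ?Z" by (rule finite_subset[OF _ fin]) blast
  have dj: "?Y \<inter> ?Z = {}" by blast
  have "card ?X = card ?Y + card ?Z" unfolding eq by (rule card_Un_disjoint[OF f1 f2 dj])
  then show ?thesis unfolding deg_def .
qed

lemma endpoint_uncovered:
  assumes sg: "simple_graph V E" and run: "min_greedy_run V E es"
    and ep: "MMs_endpoint (set es) Ms w"
  shows "w \<notin> \<Union>(set es)"
proof
  assume "w \<in> \<Union>(set es)"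
  then obtain e where eM: "e \<in> set es" and we: "w \<in> e" by blast
  obtain xs where P: "MMs_path (set es) Ms xs" and hw: "w = hd xs \<or> w = last xs"
    using ep by (auto simp: MMs_endpoint_def)
  let ?H = "set es \<union> Ms"
  have alt: "alt_path (set es) Ms xs" and cv: "comp_verts ?H (hd xs) = set xs"
    and ce: "comp_edges ?H (hd xs) = path_edges xs" using P by (auto simp: MMs_path_def)
  have dist: "distinct xs" using alt by (simp add: alt_path_def)
  obtain m where m: "m \<ge> 1" "length xs = 2*m+2" using alt by (auto simp: alt_path_def)
  have ed: "\<And>i. Suc i < length xs \<Longrightarrow> even i \<Longrightarrow> {xs ! i, xs ! Suc i} \<in> Ms - set es"
    using alt by (auto simp: alt_path_def)
  have ne: "xs \<noteq> []" using m by auto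
  have "w \<in> set xs" using hw ne by auto
  then have wc: "w \<in> comp_verts ?H (hd xs)" using cv by simp
  have "e \<in> E" using eM es_in[OF run] cur_E by (metis in_set_conv_nth subsetD)
  then obtain a b where ab: "e = {a,b}" using edge2[OF sg] by blast
  obtain x where ex: "e = {w,x}" using ab we by auto
  have "(w, x) \<in> {(a, b). {a, b} \<in> ?H}" using ex eM by auto
  then have "x \<in> comp_verts ?H (hd xs)" using wc unfolding comp_verts_def
    by (meson mem_Collect_eq rtrancl.rtrancl_into_rtrancl)
  then have "e \<in> comp_edges ?H (hd xs)" using wc ex eM by (auto simp: comp_edges_def)
  then have "e \<in> path_edges xs" using ce by simp
  then obtain k where k: "e = {xs!k, xs!Suc k}" "Suc k < length xs" by (auto simp: path_edges_def)
  have "even k"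
  proof (cases "w = hd xs")
    case True
    then have w0: "w = xs!0" using ne by (simp add: hd_conv_nth)
    have "w = xs!k \<or> w = xs!Suc k" using k we by auto
    then have "k = 0" using w0 dist k(2) nth_eq_iff_index_eq[OF dist] by (metis Suc_lessD nat.distinct(1) zero_less_Suc dual_order.strict_trans)
    then show ?thesis by simp
  next
    case False
    then have wl: "w = xs!(length xs - 1)" using hw ne by (simp add: last_conv_nth)
    have "w = xs!k \<or> w = xs!Suc k" using k we by auto
    moreover have "w \<noteq> xs!k" using wl nth_eq_iff_index_eq[OF dist] k(2) by fastforce
    ultimately have "Suc k = length xs - 1" using wl nth_eq_iff_index_eq[OF dist] k(2) by fastforce
    then have "k = 2*m" using m by simp
    then show ?thesis by simp
  qed
  then have "e \<in> Ms - set es" using ed k by simp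
  then show False using eM by simp
qed

theorem lemma8:
  fixes V :: "'a set" and E :: "'a set set" and es :: "'a set list" and Ms :: "'a set set"
  assumes "simple_graph V E"
    and "min_greedy_run V E es"
    and "maximum_matching E Ms"
    and "good_components V (set es) Ms"
  shows "\<forall>w. MMs_endpoint (set es) Ms w \<longrightarrow>
           card {v. transfer E es Ms v w} \<le> 3 \<and>
           (card {v. transfer E es Ms v w} = 3 \<longleftrightarrow>
             (\<exists>i j. i < j \<and> j < length es \<and>
                deg (cur E es i) w = 3 \<and> deg (cur E es (Suc i)) w = 1 \<and>
                {e \<in> cur E es i - cur E es (Suc i). w \<in> e} \<subseteq> E - (set es \<union> Ms) \<and>
                deg (cur E es j) w = 1 \<and> deg (cur E es (Suc j)) w = 0 \<and>
                {e \<in> cur E es j - cur E es (Suc j). w \<in> e} \<subseteq> E - (set es \<union> Ms)))"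
proof (intro allI impI)
  fix w assume ep: "MMs_endpoint (set es) Ms w"
  note sg = assms(1) and run = assms(2)
  have unc: "\<And>i. i < length es \<Longrightarrow> w \<notin> es!i"
  proof -
    fix i assume "i < length es"
    then have "es!i \<in> set es" by simp
    then show "w \<notin> es!i" using endpoint_uncovered[OF sg run ep] by blast
  qed
  define A where "A i = {e \<in> cur E es i. w \<in> e}" for i
  define D where "D i = {e \<in> cur E es i - cur E es (Suc i). w \<in> e}" for i
  define T where "T = {v. transfer E es Ms v w}"
  define F where "F = E - (set es \<union> Ms)"
  define f where "f = (\<lambda>v. {v,w})"
  have fE: "finite E" by (rule finE[OF sg])
  have finA: "\<And>i. finite (A i)"
  proof -
    fix i show "finite (A i)" unfolding A_def by (rule finite_subset[OF _ fE]) (use cur_E[of E es i] in blast)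
  qed
  have degA: "\<And>i. deg (cur E es i) w = card (A i)" by (simp add: deg_def A_def)
  have Amono: "\<And>i j. i \<le> j \<Longrightarrow> A j \<subseteq> A i" unfolding A_def using cur_mono by blast
  have DA: "\<And>i. D i \<subseteq> A i" "\<And>i. D i \<inter> A (Suc i) = {}" unfolding A_def D_def by auto
  have Dle: "\<And>i. i < length es \<Longrightarrow> card (D i) \<le> 2"
  proof -
    fix i assume i: "i < length es"
    show "card (D i) \<le> 2" unfolding D_def by (rule card_removed[OF sg run i unc[OF i]])
  qed
  have split: "\<And>i. deg (cur E es i) w = deg (cur E es (Suc i)) w + card (D i)"
    unfolding D_def by (rule deg_split[OF sg])
  have Dform: "\<And>i e. i < length es \<Longrightarrow> e \<in> D i \<Longrightarrow> \<exists>x\<in>es!i. e = {w,x}"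
  proof -
    fix i e assume i: "i < length es" and e: "e \<in> D i"
    have "e \<in> (\<lambda>x. {w,x}) ` (es!i)" using removed_edges[OF sg run i unc[OF i]] e unfolding D_def by (rule subsetD)
    then show "\<exists>x\<in>es!i. e = {w,x}" by (rule imageE) blast
  qed
  have inj: "inj f" unfolding f_def inj_on_def by (auto simp: doubleton_eq_iff)
  have Ttr: "\<And>v. v \<in> T \<Longrightarrow> f v \<in> F \<and> (\<exists>i<length es. f v \<in> D i \<and> deg (cur E es (Suc i)) w \<le> 1)"
  proof -
    fix v assume "v \<in> T"
    then have tr: "{v,w} \<in> F" and "\<exists>i<length es. v \<in> es ! i \<and>
        deg (cur E es (Suc i)) w < deg (cur E es i) w \<and> deg (cur E es (Suc i)) w \<le> 1"
      by (auto simp: T_def transfer_def F_def)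
    then obtain i where i: "i < length es" "v \<in> es!i" "deg (cur E es (Suc i)) w \<le> 1" by blast
    have "\<forall>k\<le>i. {v,w} \<in> cur E es k"
    proof (intro allI impI)
      fix k show "k \<le> i \<Longrightarrow> {v,w} \<in> cur E es k"
      proof (induction k)
        case 0 then show ?case using tr by (simp add: cur_0 F_def)
      next
        case (Suc k)
        then have k: "k < i" "k < length es" using i by auto
        have "v \<notin> es!k" using es_disj[OF run k(1) i(1)] i(2) by blast
        moreover have "w \<notin> es!k" using unc k(2) by blast
        ultimately show ?case using Suc k cur_Suc[OF k(2), of E] by (auto simp: remove_step_def)
      qed
    qed
    then have "{v,w} \<in> cur E es i" by simp
    moreover have "{v,w} \<notin> cur E es (Suc i)" using cur_Suc[OF i(1), of E] i(2) by (auto simp: remove_step_def)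
    ultimately have "{v,w} \<in> D i" by (simp add: D_def)
    then show "f v \<in> F \<and> (\<exists>i<length es. f v \<in> D i \<and> deg (cur E es (Suc i)) w \<le> 1)"
      using tr i unfolding f_def by blast
  qed
  have imgF: "f ` T \<subseteq> F" using Ttr by blast
  have "f ` T \<subseteq> E" using imgF by (auto simp: F_def)
  then have finimg: "finite (f ` T)" using fE finite_subset by blast
  have finT: "finite T" using finite_imageD[OF finimg] inj by (meson inj_on_subset subset_UNIV)
  have cardimg: "card (f ` T) = card T" using card_image inj by (metis inj_on_subset subset_UNIV)
  have main: "T \<noteq> {} \<Longrightarrow> card T \<le> 3 \<and> (card T = 3 \<longrightarrow> (\<exists>i j. i < j \<and> j < length es \<and>
                deg (cur E es i) w = 3 \<and> deg (cur E es (Suc i)) w = 1 \<and> D i \<subseteq> F \<and>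
                deg (cur E es j) w = 1 \<and> deg (cur E es (Suc j)) w = 0 \<and> D j \<subseteq> F))"
  proof -
    assume "T \<noteq> {}"
    then obtain v0 where "v0 \<in> T" by blast
    then obtain i1 where i1: "i1 < length es" "deg (cur E es (Suc i1)) w \<le> 1" using Ttr by blast
    define i0 where "i0 = (LEAST i. deg (cur E es (Suc i)) w \<le> 1)"
    have i0le: "\<And>i. deg (cur E es (Suc i)) w \<le> 1 \<Longrightarrow> i0 \<le> i" unfolding i0_def by (rule Least_le)
    have i0d: "deg (cur E es (Suc i0)) w \<le> 1" unfolding i0_def using i1(2) by (rule LeastI)
    have i0len: "i0 < length es" using i0le[OF i1(2)] i1(1) by simp
    have sub: "f ` T \<subseteq> A i0"
    proof
      fix y assume "y \<in> f ` T"
      then obtain v where v: "v \<in> T" "y = f v" by blast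
      then obtain i where "i < length es" "f v \<in> D i" "deg (cur E es (Suc i)) w \<le> 1" using Ttr by blast
      then show "y \<in> A i0" using i0le DA(1) Amono v(2) by blast
    qed
    have cA: "card (A i0) \<le> 3" using split[of i0] Dle[OF i0len] i0d degA[of i0] by simp
    have le3: "card T \<le> 3" using card_mono[OF finA sub] cA cardimg by simp
    moreover have "card T = 3 \<longrightarrow> (\<exists>i j. i < j \<and> j < length es \<and>
                deg (cur E es i) w = 3 \<and> deg (cur E es (Suc i)) w = 1 \<and> D i \<subseteq> F \<and>
                deg (cur E es j) w = 1 \<and> deg (cur E es (Suc j)) w = 0 \<and> D j \<subseteq> F)"
    proof
      assume c3: "card T = 3"
      have eqA: "f ` T = A i0" using card_subset_eq[OF finA sub] cardimg c3 cA card_mono[OF finA sub] by simp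
      have d3: "deg (cur E es i0) w = 3" using eqA cardimg c3 degA by simp
      have d1: "deg (cur E es (Suc i0)) w = 1" using d3 split[of i0] Dle[OF i0len] i0d by simp
      have DiF: "D i0 \<subseteq> F" using DA(1) eqA imgF by blast
      have "card (A (Suc i0)) = 1" using d1 degA by simp
      then obtain e where Ae: "A (Suc i0) = {e}" by (rule card_1_singletonE)
      have eF: "e \<in> F" using Ae Amono[of i0 "Suc i0"] eqA imgF by auto
      have ein: "e \<in> cur E es (Suc i0)" "w \<in> e" using Ae by (auto simp: A_def)
      define j where "j = (LEAST j. e \<notin> cur E es (Suc j))"
      have ex: "e \<notin> cur E es (Suc (length es - 1))" using cur_end[OF run, of "Suc (length es - 1)"] by simp
      have jle: "j \<le> length es - 1" unfolding j_def using ex by (rule Least_le)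
      have jout: "e \<notin> cur E es (Suc j)" unfolding j_def using ex by (rule LeastI)
      have jlen: "j < length es" using jle i0len by simp
      have ij: "i0 < j"
      proof (rule ccontr)
        assume "\<not> i0 < j"
        then have "cur E es (Suc i0) \<subseteq> cur E es (Suc j)" by (intro cur_mono) simp
        then show False using ein jout by blast
      qed
      have jin: "e \<in> cur E es j"
      proof -
        obtain j' where j': "j = Suc j'" using ij by (cases j) auto
        have "\<not> e \<notin> cur E es (Suc j')" using not_less_Least[of j' "\<lambda>j. e \<notin> cur E es (Suc j)"] j' j_def by simp
        then show ?thesis using j' by simp
      qed
      have Aj: "A j = {e}" using Amono[of "Suc i0" j] ij Ae jin ein by (auto simp: A_def)
      have Aj1: "A (Suc j) = {}" using Amono[of j "Suc j"] Aj jout by (auto simp: A_def)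
      have "e \<in> D j" by (simp add: D_def jin jout ein)
      then have Dj: "D j = {e}" using DA(1)[of j] Aj by blast
      show "\<exists>i j. i < j \<and> j < length es \<and>
                deg (cur E es i) w = 3 \<and> deg (cur E es (Suc i)) w = 1 \<and> D i \<subseteq> F \<and>
                deg (cur E es j) w = 1 \<and> deg (cur E es (Suc j)) w = 0 \<and> D j \<subseteq> F"
      proof (rule exI[of _ i0], rule exI[of _ j], intro conjI)
        show "D j \<subseteq> F" using Dj eF by simp
        show "deg (cur E es j) w = 1" using degA[of j] Aj by simp
        show "deg (cur E es (Suc j)) w = 0" using degA[of "Suc j"] Aj1 by simp
      qed (use ij jlen d3 d1 DiF in auto)
    qed
    ultimately show ?thesis by blast
  qed
  have le3: "card T \<le> 3" using main by (cases "T = {}") auto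
  have bwd: "(\<exists>i j. i < j \<and> j < length es \<and>
                deg (cur E es i) w = 3 \<and> deg (cur E es (Suc i)) w = 1 \<and> D i \<subseteq> F \<and>
                deg (cur E es j) w = 1 \<and> deg (cur E es (Suc j)) w = 0 \<and> D j \<subseteq> F) \<Longrightarrow> card T = 3"
  proof -
    assume hx: "\<exists>i j. i < j \<and> j < length es \<and>
                deg (cur E es i) w = 3 \<and> deg (cur E es (Suc i)) w = 1 \<and> D i \<subseteq> F \<and>
                deg (cur E es j) w = 1 \<and> deg (cur E es (Suc j)) w = 0 \<and> D j \<subseteq> F"
    obtain i j where h: "i < j" "j < length es" "deg (cur E es i) w = 3" "deg (cur E es (Suc i)) w = 1"
      "D i \<subseteq> F" "deg (cur E es j) w = 1" "deg (cur E es (Suc j)) w = 0" "D j \<subseteq> F" using hx by blast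
    have ilen: "i < length es" using h by simp
    have cDi: "card (D i) = 2" using split[of i] h by simp
    have cDj: "card (D j) = 1" using split[of j] h by simp
    have tr: "\<And>k e. k < length es \<Longrightarrow> e \<in> D k \<Longrightarrow> D k \<subseteq> F \<Longrightarrow>
        deg (cur E es (Suc k)) w < deg (cur E es k) w \<Longrightarrow> deg (cur E es (Suc k)) w \<le> 1 \<Longrightarrow> e \<in> f ` T"
    proof -
      fix k e assume k: "k < length es" "e \<in> D k" "D k \<subseteq> F"
        "deg (cur E es (Suc k)) w < deg (cur E es k) w" "deg (cur E es (Suc k)) w \<le> 1"
      obtain x where x: "x \<in> es!k" "e = {w,x}" using Dform[OF k(1,2)] by blast
      have "{x,w} \<in> F" using k(2,3) x(2) by (auto simp: insert_commute)
      then have "x \<in> T" using k x unfolding T_def transfer_def F_def by blast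
      then show "e \<in> f ` T" using x(2) unfolding f_def by (auto simp: insert_commute)
    qed
    have "D i \<subseteq> f ` T" using tr[OF ilen _ h(5)] h(3,4) by auto
    moreover have "D j \<subseteq> f ` T" using tr[OF h(2) _ h(8)] h(6,7) by auto
    ultimately have su: "D i \<union> D j \<subseteq> f ` T" by blast
    have "D j \<subseteq> A (Suc i)" using DA(1)[of j] Amono[of "Suc i" j] h(1) by auto
    then have "D i \<inter> D j = {}" using DA(2)[of i] by blast
    moreover have "finite (D i)" by (rule finite_subset[OF DA(1) finA])
    moreover have "finite (D j)" by (rule finite_subset[OF DA(1) finA])
    ultimately have "card (D i \<union> D j) = card (D i) + card (D j)" by (simp add: card_Un_disjoint)
    then have "card (D i \<union> D j) = 3" using cDi cDj by simp
    then have "3 \<le> card T" using card_mono[OF finimg su] cardimg by simp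
    then show ?thesis using le3 by simp
  qed
  have forth: "card T = 3 \<Longrightarrow> \<exists>i j. i < j \<and> j < length es \<and>
                deg (cur E es i) w = 3 \<and> deg (cur E es (Suc i)) w = 1 \<and> D i \<subseteq> F \<and>
                deg (cur E es j) w = 1 \<and> deg (cur E es (Suc j)) w = 0 \<and> D j \<subseteq> F"
  proof -
    assume c: "card T = 3"
    then have ne: "T \<noteq> {}" by auto
    have "card T = 3 \<longrightarrow> (\<exists>i j. i < j \<and> j < length es \<and>
                deg (cur E es i) w = 3 \<and> deg (cur E es (Suc i)) w = 1 \<and> D i \<subseteq> F \<and>
                deg (cur E es j) w = 1 \<and> deg (cur E es (Suc j)) w = 0 \<and> D j \<subseteq> F)"
      using main[OF ne] by (rule conjunct2)
    then show ?thesis using c by (rule mp)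
  qed
  have eqS: "{v. transfer E es Ms v w} = T" by (simp add: T_def)
  have eqD: "\<And>i. {e \<in> cur E es i - cur E es (Suc i). w \<in> e} = D i" by (simp add: D_def)
  have eqF: "E - (set es \<union> Ms) = F" by (simp add: F_def)
  show "card {v. transfer E es Ms v w} \<le> 3 \<and>
           (card {v. transfer E es Ms v w} = 3 \<longleftrightarrow>
             (\<exists>i j. i < j \<and> j < length es \<and>
                deg (cur E es i) w = 3 \<and> deg (cur E es (Suc i)) w = 1 \<and>
                {e \<in> cur E es i - cur E es (Suc i). w \<in> e} \<subseteq> E - (set es \<union> Ms) \<and>
                deg (cur E es j) w = 1 \<and> deg (cur E es (Suc j)) w = 0 \<and>
                {e \<in> cur E es j - cur E es (Suc j). w \<in> e} \<subseteq> E - (set es \<union> Ms)))"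
    unfolding eqS eqD eqF using le3 bwd forth by blast
qed

end
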